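(* Let $T=(p,q:F\to E)$ be an LR textile system, and let $\Lambda_T$ be its associated 2-graph. Then $T$ is essential if and only if $\Lambda_T$ is essential.
   Context: Directed graph $E=(E^0,E^1,r,s)$ is essential if $r$ and $s$ are onto $E^0$. Textile system $T=(p,q:F\to E)$: graph homomorphisms $p,q$ (commuting with $r,s$) with $f\mapsto(r(f),p(f),s(f),q(f))$ injective on $F^1$. LR: $p$ has unique $r$-path lifting (for $v\in F^0,e\in E^1$ with $p(v)=r(e)$, exactly one $f\in F^1$ with $r(f)=v,p(f)=e$) and $q$ has unique $s$-path lifting (same with $s$). $T$ is essential if $F$ is essential and $p,q$ are surjective (on vertices and edges). A 2-graph $\Lambda$ (category with degree functor $d:\Lambda\to\mathbb N^2$ with unique factorization, $\Lambda^m=d^{-1}(m)$) is essential if $v\Lambda^m$ and $\Lambda^mv$ are nonempty for all vertices $v$ and $m\in\mathbb N^2$. $\Lambda_T$ (a 2-graph when $T$ is LR): vertices $E^0$; color-1 edges $E^1$ with range and source from $E$; color-2 edges $F^0$ with $r(w)=q(w)$, $s(w)=p(w)$; commuting squares $ve\sim e'w$ iff some $f\in F^1$ has $r(f)=v,s(f)=w,p(f)=e,q(f)=e'$; $\Lambda_T^{\varepsilon_1+\varepsilon_2}$ corresponds to $F^1$. *)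

theory Defs
  imports Main
begin

record ('v, 'e) dgraph =
  verts :: "'v set"
  arcs  :: "'e set"
  rng   :: "'e \<Rightarrow> 'v"
  src   :: "'e \<Rightarrow> 'v"

definition is_dgraph :: "('v, 'e) dgraph \<Rightarrow> bool" where
  "is_dgraph G \<longleftrightarrow> (\<forall>e\<in>arcs G. rng G e \<in> verts G \<and> src G e \<in> verts G)"

definition graph_essential :: "('v, 'e) dgraph \<Rightarrow> bool" where
  "graph_essential G \<longleftrightarrow> rng G ` arcs G = verts G \<and> src G ` arcs G = verts G"

definition graph_hom ::
  "('w, 'f) dgraph \<Rightarrow> ('v, 'e) dgraph \<Rightarrow> ('w \<Rightarrow> 'v) \<Rightarrow> ('f \<Rightarrow> 'e) \<Rightarrow> bool" where
  "graph_hom F E h0 h1 \<longleftrightarrow>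
     (\<forall>w\<in>verts F. h0 w \<in> verts E) \<and>
     (\<forall>f\<in>arcs F. h1 f \<in> arcs E \<and> rng E (h1 f) = h0 (rng F f) \<and> src E (h1 f) = h0 (src F f))"

record ('v, 'e, 'w, 'f) textile =
  tE  :: "('v, 'e) dgraph"
  tF  :: "('w, 'f) dgraph"
  tp0 :: "'w \<Rightarrow> 'v"
  tp1 :: "'f \<Rightarrow> 'e"
  tq0 :: "'w \<Rightarrow> 'v"
  tq1 :: "'f \<Rightarrow> 'e"

definition textile_system :: "('v, 'e, 'w, 'f) textile \<Rightarrow> bool" where
  "textile_system T \<longleftrightarrow>
     is_dgraph (tE T) \<and> is_dgraph (tF T) \<and>
     graph_hom (tF T) (tE T) (tp0 T) (tp1 T) \<and>
     graph_hom (tF T) (tE T) (tq0 T) (tq1 T) \<and>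
     inj_on (\<lambda>f. (rng (tF T) f, tp1 T f, src (tF T) f, tq1 T f)) (arcs (tF T))"

text \<open>LR: p has unique r-path lifting and q has unique s-path lifting.\<close>
definition textile_LR :: "('v, 'e, 'w, 'f) textile \<Rightarrow> bool" where
  "textile_LR T \<longleftrightarrow>
     textile_system T \<and>
     (\<forall>v\<in>verts (tF T). \<forall>e\<in>arcs (tE T). tp0 T v = rng (tE T) e \<longrightarrow>
        (\<exists>!f. f \<in> arcs (tF T) \<and> rng (tF T) f = v \<and> tp1 T f = e)) \<and>
     (\<forall>v\<in>verts (tF T). \<forall>e\<in>arcs (tE T). tq0 T v = src (tE T) e \<longrightarrow>
        (\<exists>!f. f \<in> arcs (tF T) \<and> src (tF T) f = v \<and> tq1 T f = e))"

definition textile_essential :: "('v, 'e, 'w, 'f) textile \<Rightarrow> bool" where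
  "textile_essential T \<longleftrightarrow>
     graph_essential (tF T) \<and>
     tp0 T ` verts (tF T) = verts (tE T) \<and> tp1 T ` arcs (tF T) = arcs (tE T) \<and>
     tq0 T ` verts (tF T) = verts (tE T) \<and> tq1 T ` arcs (tF T) = arcs (tE T)"

text \<open>Skeleton of \<Lambda>_T: vertices E^0; colour-1 edges E^1 (Inl), colour-2 edges F^0 (Inr)
  with r(w) = q(w), s(w) = p(w).\<close>
fun sk_rng :: "('v, 'e, 'w, 'f) textile \<Rightarrow> ('e + 'w) \<Rightarrow> 'v" where
  "sk_rng T (Inl e) = rng (tE T) e"
| "sk_rng T (Inr w) = tq0 T w"

fun sk_src :: "('v, 'e, 'w, 'f) textile \<Rightarrow> ('e + 'w) \<Rightarrow> 'v" where
  "sk_src T (Inl e) = src (tE T) e"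
| "sk_src T (Inr w) = tp0 T w"

fun sk_edge :: "('v, 'e, 'w, 'f) textile \<Rightarrow> ('e + 'w) \<Rightarrow> bool" where
  "sk_edge T (Inl e) = (e \<in> arcs (tE T))"
| "sk_edge T (Inr w) = (w \<in> verts (tF T))"

definition sk_square :: "('v, 'e, 'w, 'f) textile \<Rightarrow> 'w \<Rightarrow> 'e \<Rightarrow> 'e \<Rightarrow> 'w \<Rightarrow> bool" where
  "sk_square T v e e' w \<longleftrightarrow>
     (\<exists>f\<in>arcs (tF T). rng (tF T) f = v \<and> src (tF T) f = w \<and> tp1 T f = e \<and> tq1 T f = e')"

text \<open>A representative of a morphism of \<Lambda>_T: a composable skeleton path
  x_1 x_2 ... x_k (s(x_i) = r(x_{i+1})) from range vertex a to source vertex b;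
  the empty path represents the vertex a = b.\<close>
definition sk_path :: "('v, 'e, 'w, 'f) textile \<Rightarrow> 'v \<Rightarrow> ('e + 'w) list \<Rightarrow> 'v \<Rightarrow> bool" where
  "sk_path T a xs b \<longleftrightarrow>
     a \<in> verts (tE T) \<and> b \<in> verts (tE T) \<and> (\<forall>x\<in>set xs. sk_edge T x) \<and>
     (if xs = [] then a = b
      else sk_rng T (hd xs) = a \<and> sk_src T (last xs) = b \<and>
           (\<forall>i. Suc i < length xs \<longrightarrow> sk_src T (xs ! i) = sk_rng T (xs ! Suc i)))"

text \<open>One-step square move (replace v e by e' w) and the generated equivalence;
  morphisms of \<Lambda>_T are equivalence classes of skeleton paths.\<close>
definition sq_step :: "('v, 'e, 'w, 'f) textile \<Rightarrow> ('e + 'w) list \<Rightarrow> ('e + 'w) list \<Rightarrow> bool" where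
  "sq_step T xs ys \<longleftrightarrow>
     (\<exists>us vs v e e' w. sk_square T v e e' w \<and>
        xs = us @ [Inr v, Inl e] @ vs \<and> ys = us @ [Inl e', Inr w] @ vs)"

definition lam_mor :: "('v, 'e, 'w, 'f) textile \<Rightarrow> ('v \<times> ('e + 'w) list \<times> 'v) set set" where
  "lam_mor T = {{(a', ys, b'). a' = a \<and> b' = b \<and> sk_path T a ys b \<and>
                    (\<lambda>x y. sq_step T x y \<or> sq_step T y x)\<^sup>*\<^sup>* xs ys} | a xs b. sk_path T a xs b}"

definition lam_deg :: "('e + 'w) list \<Rightarrow> nat \<times> nat" where
  "lam_deg xs = (length (filter isl xs), length (filter (\<lambda>x. \<not> isl x) xs))"

text \<open>Range, source and degree of a morphism (well defined on classes).\<close>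
definition mor_rng :: "('v \<times> ('e + 'w) list \<times> 'v) set \<Rightarrow> 'v" where
  "mor_rng M = fst (SOME t. t \<in> M)"
definition mor_src :: "('v \<times> ('e + 'w) list \<times> 'v) set \<Rightarrow> 'v" where
  "mor_src M = snd (snd (SOME t. t \<in> M))"
definition mor_deg :: "('v \<times> ('e + 'w) list \<times> 'v) set \<Rightarrow> nat \<times> nat" where
  "mor_deg M = lam_deg (fst (snd (SOME t. t \<in> M)))"

definition lamT_essential :: "('v, 'e, 'w, 'f) textile \<Rightarrow> bool" where
  "lamT_essential T \<longleftrightarrow>
     (\<forall>v\<in>verts (tE T). \<forall>m::nat \<times> nat.
        (\<exists>M\<in>lam_mor T. mor_rng M = v \<and> mor_deg M = m) \<and>
        (\<exists>M\<in>lam_mor T. mor_src M = v \<and> mor_deg M = m))"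

end

theory Submission
  imports Defs
begin

lemma sq_step_deg: "sq_step T x y \<Longrightarrow> lam_deg x = lam_deg y"
  by (auto simp: sq_step_def lam_deg_def)

lemma rt_deg:
  "(\<lambda>x y. sq_step T x y \<or> sq_step T y x)\<^sup>*\<^sup>* xs ys \<Longrightarrow> lam_deg xs = lam_deg ys"
  by (induct rule: rtranclp_induct) (auto dest: sq_step_deg)

lemma mor_of_path:
  assumes "sk_path T a xs b"
  shows "\<exists>M\<in>lam_mor T. mor_rng M = a \<and> mor_src M = b \<and> mor_deg M = lam_deg xs"
proof -
  define M where "M = {(a', ys, b'). a' = a \<and> b' = b \<and> sk_path T a ys b \<and>
                    (\<lambda>x y. sq_step T x y \<or> sq_step T y x)\<^sup>*\<^sup>* xs ys}"
  have M: "M \<in> lam_mor T" unfolding M_def lam_mor_def using assms by blast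
  have "(a, xs, b) \<in> M" unfolding M_def using assms by auto
  hence "(SOME t. t \<in> M) \<in> M" by (rule someI)
  then obtain ys where t: "(SOME t. t \<in> M) = (a, ys, b)"
    and r: "(\<lambda>x y. sq_step T x y \<or> sq_step T y x)\<^sup>*\<^sup>* xs ys"
    unfolding M_def by auto
  show ?thesis using M t rt_deg[OF r]
    by (auto simp: mor_rng_def mor_src_def mor_deg_def intro!: bexI[of _ M])
qed

lemma path_of_mor:
  assumes "M \<in> lam_mor T"
  shows "\<exists>a ys b. sk_path T a ys b \<and> mor_rng M = a \<and> mor_src M = b \<and> mor_deg M = lam_deg ys"
proof -
  obtain a xs b where p: "sk_path T a xs b" and
    M: "M = {(a', ys, b'). a' = a \<and> b' = b \<and> sk_path T a ys b \<and>
                    (\<lambda>x y. sq_step T x y \<or> sq_step T y x)\<^sup>*\<^sup>* xs ys}"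
    using assms unfolding lam_mor_def by blast
  have "(a, xs, b) \<in> M" unfolding M using p by auto
  hence "(SOME t. t \<in> M) \<in> M" by (rule someI)
  then obtain ys where t: "(SOME t. t \<in> M) = (a, ys, b)" and "sk_path T a ys b"
    unfolding M by auto
  thus ?thesis using t by (auto simp: mor_rng_def mor_src_def mor_deg_def)
qed

lemma lamT_ess_iff:
  "lamT_essential T \<longleftrightarrow> (\<forall>v\<in>verts (tE T). \<forall>m.
     (\<exists>xs b. sk_path T v xs b \<and> lam_deg xs = m) \<and> (\<exists>xs a. sk_path T a xs v \<and> lam_deg xs = m))"
  unfolding lamT_essential_def
  apply (rule iffI)
   apply (metis path_of_mor)
  apply (metis mor_of_path)
  done

lemma path_cons:
  assumes "sk_edge T x" "sk_rng T x \<in> verts (tE T)" "sk_path T (sk_src T x) xs b"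
  shows "sk_path T (sk_rng T x) (x # xs) b"
proof -
  have "\<forall>i. Suc i < length (x # xs) \<longrightarrow> sk_src T ((x#xs) ! i) = sk_rng T ((x#xs) ! Suc i)"
  proof (intro allI impI)
    fix i assume i: "Suc i < length (x # xs)"
    show "sk_src T ((x#xs) ! i) = sk_rng T ((x#xs) ! Suc i)"
    proof (cases i)
      case 0 then show ?thesis using assms(3) i by (cases xs) (auto simp: sk_path_def)
    next
      case (Suc j) then show ?thesis using assms(3) i by (auto simp: sk_path_def split: if_splits)
    qed
  qed
  thus ?thesis using assms by (auto simp: sk_path_def split: if_splits)
qed

lemma deg10: "lam_deg xs = (1, 0) \<Longrightarrow> \<exists>e. xs = [Inl e]"
proof -
  assume a: "lam_deg xs = (1, 0)"
  have "length (filter isl xs) + length (filter (\<lambda>x. \<not> isl x) xs) = length xs"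
    by (rule sum_length_filter_compl)
  with a have "length xs = 1" by (simp add: lam_deg_def)
  then obtain x where x: "xs = [x]" by (metis One_nat_def length_0_conv length_Suc_conv)
  with a show ?thesis by (cases x) (auto simp: lam_deg_def)
qed

lemma deg01: "lam_deg xs = (0, 1) \<Longrightarrow> \<exists>w. xs = [Inr w]"
proof -
  assume a: "lam_deg xs = (0, 1)"
  have "length (filter isl xs) + length (filter (\<lambda>x. \<not> isl x) xs) = length xs"
    by (rule sum_length_filter_compl)
  with a have "length xs = 1" by (simp add: lam_deg_def)
  then obtain x where x: "xs = [x]" by (metis One_nat_def length_0_conv length_Suc_conv)
  with a show ?thesis by (cases x) (auto simp: lam_deg_def)
qed

lemma path_single: "sk_path T a [x] b \<longleftrightarrow>
   a \<in> verts (tE T) \<and> b \<in> verts (tE T) \<and> sk_edge T x \<and> sk_rng T x = a \<and> sk_src T x = b"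
  by (auto simp: sk_path_def)

lemma range_paths:
  assumes "\<forall>v\<in>verts (tE T). \<exists>e\<in>arcs (tE T). rng (tE T) e = v"
    "\<forall>v\<in>verts (tE T). \<exists>w\<in>verts (tF T). tq0 T w = v"
    "\<forall>e\<in>arcs (tE T). src (tE T) e \<in> verts (tE T)"
    "\<forall>w\<in>verts (tF T). tp0 T w \<in> verts (tE T)"
  shows "\<forall>v\<in>verts (tE T). \<exists>xs b. sk_path T v xs b \<and> lam_deg xs = (n, k)"
proof (induction n)
  case 0
  show ?case
  proof (induction k)
    case 0 then show ?case by (auto simp: sk_path_def lam_deg_def intro!: exI[of _ "[]"])
  next
    case (Suc k)
    show ?case
    proof
      fix v assume v: "v \<in> verts (tE T)"
      then obtain w where w: "w \<in> verts (tF T)" "tq0 T w = v" using assms(2) by blast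
      then obtain xs b where p: "sk_path T (tp0 T w) xs b" "lam_deg xs = (0, k)"
        using Suc assms(4) by blast
      have "sk_path T (sk_rng T (Inr w)) (Inr w # xs) b"
        using p w v by (intro path_cons) auto
      moreover have "lam_deg (Inr w # xs) = (0, Suc k)" using p by (simp add: lam_deg_def)
      ultimately show "\<exists>xs b. sk_path T v xs b \<and> lam_deg xs = (0, Suc k)" using w by auto
    qed
  qed
next
  case (Suc n)
  show ?case
  proof
    fix v assume v: "v \<in> verts (tE T)"
    then obtain e where e: "e \<in> arcs (tE T)" "rng (tE T) e = v" using assms(1) by blast
    then obtain xs b where p: "sk_path T (src (tE T) e) xs b" "lam_deg xs = (n, k)"
      using Suc assms(3) by blast
    have "sk_path T (sk_rng T (Inl e)) (Inl e # xs) b"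
      using p e v by (intro path_cons) auto
    moreover have "lam_deg (Inl e # xs) = (Suc n, k)" using p by (simp add: lam_deg_def)
    ultimately show "\<exists>xs b. sk_path T v xs b \<and> lam_deg xs = (Suc n, k)" using e by auto
  qed
qed

lemma source_paths:
  assumes "\<forall>v\<in>verts (tE T). \<exists>e\<in>arcs (tE T). src (tE T) e = v"
    "\<forall>v\<in>verts (tE T). \<exists>w\<in>verts (tF T). tp0 T w = v"
    "\<forall>e\<in>arcs (tE T). rng (tE T) e \<in> verts (tE T)"
    "\<forall>w\<in>verts (tF T). tq0 T w \<in> verts (tE T)"
    "v \<in> verts (tE T)"
  shows "\<exists>xs a. sk_path T a xs v \<and> lam_deg xs = (n, k)"
proof (induction n)
  case 0
  show ?case
  proof (induction k)
    case 0 then show ?case using assms(5) by (auto simp: sk_path_def lam_deg_def intro!: exI[of _ "[]"])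
  next
    case (Suc k)
    then obtain xs a where p: "sk_path T a xs v" "lam_deg xs = (0, k)" by blast
    have a: "a \<in> verts (tE T)" using p by (simp add: sk_path_def)
    then obtain w where w: "w \<in> verts (tF T)" "tp0 T w = a" using assms(2) by blast
    have "sk_path T (sk_rng T (Inr w)) (Inr w # xs) v"
      using p w assms(4) by (intro path_cons) auto
    moreover have "lam_deg (Inr w # xs) = (0, Suc k)" using p by (simp add: lam_deg_def)
    ultimately show ?case by blast
  qed
next
  case (Suc n)
  then obtain xs a where p: "sk_path T a xs v" "lam_deg xs = (n, k)" by blast
  have a: "a \<in> verts (tE T)" using p by (simp add: sk_path_def)
  then obtain e where e: "e \<in> arcs (tE T)" "src (tE T) e = a" using assms(1) by blast
  have "sk_path T (sk_rng T (Inl e)) (Inl e # xs) v"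
    using p e assms(3) by (intro path_cons) auto
  moreover have "lam_deg (Inl e # xs) = (Suc n, k)" using p by (simp add: lam_deg_def)
  ultimately show ?case by blast
qed

theorem proposition4p8:
  fixes T :: "('v, 'e, 'w, 'f) textile"
  assumes "textile_LR T"
  shows "textile_essential T \<longleftrightarrow> lamT_essential T"
proof -
  have ts: "textile_system T" using assms by (simp add: textile_LR_def)
  have dE: "is_dgraph (tE T)" and dF: "is_dgraph (tF T)"
    and hp: "graph_hom (tF T) (tE T) (tp0 T) (tp1 T)"
    and hq: "graph_hom (tF T) (tE T) (tq0 T) (tq1 T)"
    using ts by (auto simp: textile_system_def)
  have liftr: "\<And>v e. v\<in>verts (tF T) \<Longrightarrow> e\<in>arcs (tE T) \<Longrightarrow> tp0 T v = rng (tE T) e \<Longrightarrow>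
        \<exists>f. f \<in> arcs (tF T) \<and> rng (tF T) f = v \<and> tp1 T f = e"
    using assms unfolding textile_LR_def by blast
  have lifts: "\<And>v e. v\<in>verts (tF T) \<Longrightarrow> e\<in>arcs (tE T) \<Longrightarrow> tq0 T v = src (tE T) e \<Longrightarrow>
        \<exists>f. f \<in> arcs (tF T) \<and> src (tF T) f = v \<and> tq1 T f = e"
    using assms unfolding textile_LR_def by blast
  show ?thesis
  proof
    assume ess: "textile_essential T"
    have a1: "\<forall>v\<in>verts (tE T). \<exists>e\<in>arcs (tE T). rng (tE T) e = v"
    proof
      fix v assume "v \<in> verts (tE T)"
      then obtain w where w: "w \<in> verts (tF T)" "tp0 T w = v" using ess
        unfolding textile_essential_def by (metis imageE)
      then obtain f where "f \<in> arcs (tF T)" "rng (tF T) f = w" using ess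
        unfolding textile_essential_def graph_essential_def by (metis imageE)
      thus "\<exists>e\<in>arcs (tE T). rng (tE T) e = v" using hp w unfolding graph_hom_def by metis
    qed
    have a1': "\<forall>v\<in>verts (tE T). \<exists>e\<in>arcs (tE T). src (tE T) e = v"
    proof
      fix v assume "v \<in> verts (tE T)"
      then obtain w where w: "w \<in> verts (tF T)" "tp0 T w = v" using ess
        unfolding textile_essential_def by (metis imageE)
      then obtain f where "f \<in> arcs (tF T)" "src (tF T) f = w" using ess
        unfolding textile_essential_def graph_essential_def by (metis imageE)
      thus "\<exists>e\<in>arcs (tE T). src (tE T) e = v" using hp w unfolding graph_hom_def by metis
    qed
    have a2: "\<forall>v\<in>verts (tE T). \<exists>w\<in>verts (tF T). tq0 T w = v"
      "\<forall>v\<in>verts (tE T). \<exists>w\<in>verts (tF T). tp0 T w = v"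
      using ess unfolding textile_essential_def by (metis imageE)+
    have a3: "\<forall>e\<in>arcs (tE T). src (tE T) e \<in> verts (tE T)"
      "\<forall>e\<in>arcs (tE T). rng (tE T) e \<in> verts (tE T)"
      using dE unfolding is_dgraph_def by auto
    have a4: "\<forall>w\<in>verts (tF T). tp0 T w \<in> verts (tE T)"
      "\<forall>w\<in>verts (tF T). tq0 T w \<in> verts (tE T)"
      using hp hq unfolding graph_hom_def by auto
    show "lamT_essential T"
      unfolding lamT_ess_iff
    proof (intro ballI allI conjI)
      fix v and m :: "nat \<times> nat" assume v: "v \<in> verts (tE T)"
      obtain n k where m: "m = (n, k)" by (cases m)
      show "\<exists>xs b. sk_path T v xs b \<and> lam_deg xs = m"
        using range_paths[OF a1 a2(1) a3(1) a4(1)] v m by blast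
      show "\<exists>xs a. sk_path T a xs v \<and> lam_deg xs = m"
        using source_paths[OF a1' a2(2) a3(2) a4(2) v] m by blast
    qed
  next
    assume "lamT_essential T"
    hence L: "\<And>v m. v \<in> verts (tE T) \<Longrightarrow>
       (\<exists>xs b. sk_path T v xs b \<and> lam_deg xs = m) \<and> (\<exists>xs a. sk_path T a xs v \<and> lam_deg xs = m)"
      unfolding lamT_ess_iff by blast
    have r1: "\<And>v. v \<in> verts (tE T) \<Longrightarrow> \<exists>e\<in>arcs (tE T). rng (tE T) e = v"
    proof -
      fix v assume "v \<in> verts (tE T)"
      then obtain xs b where "sk_path T v xs b" "lam_deg xs = (1,0)" using L by blast
      thus "\<exists>e\<in>arcs (tE T). rng (tE T) e = v" by (metis deg10 path_single sk_edge.simps(1) sk_rng.simps(1) sk_src.simps(1))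
    qed
    have s1: "\<And>v. v \<in> verts (tE T) \<Longrightarrow> \<exists>e\<in>arcs (tE T). src (tE T) e = v"
    proof -
      fix v assume "v \<in> verts (tE T)"
      then obtain xs a where "sk_path T a xs v" "lam_deg xs = (1,0)" using L by blast
      thus "\<exists>e\<in>arcs (tE T). src (tE T) e = v" by (metis deg10 path_single sk_edge.simps(1) sk_rng.simps(1) sk_src.simps(1))
    qed
    have q0: "\<And>v. v \<in> verts (tE T) \<Longrightarrow> \<exists>w\<in>verts (tF T). tq0 T w = v"
    proof -
      fix v assume "v \<in> verts (tE T)"
      then obtain xs b where "sk_path T v xs b" "lam_deg xs = (0,1)" using L by blast
      thus "\<exists>w\<in>verts (tF T). tq0 T w = v" by (metis deg01 path_single sk_edge.simps(2) sk_rng.simps(2) sk_src.simps(2))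
    qed
    have p0: "\<And>v. v \<in> verts (tE T) \<Longrightarrow> \<exists>w\<in>verts (tF T). tp0 T w = v"
    proof -
      fix v assume "v \<in> verts (tE T)"
      then obtain xs a where "sk_path T a xs v" "lam_deg xs = (0,1)" using L by blast
      thus "\<exists>w\<in>verts (tF T). tp0 T w = v" by (metis deg01 path_single sk_edge.simps(2) sk_rng.simps(2) sk_src.simps(2))
    qed
    have Ev: "\<And>e. e \<in> arcs (tE T) \<Longrightarrow> rng (tE T) e \<in> verts (tE T) \<and> src (tE T) e \<in> verts (tE T)"
      using dE unfolding is_dgraph_def by auto
    have Fv: "\<And>f. f \<in> arcs (tF T) \<Longrightarrow> rng (tF T) f \<in> verts (tF T) \<and> src (tF T) f \<in> verts (tF T)"
      using dF unfolding is_dgraph_def by auto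
    have P0: "tp0 T ` verts (tF T) = verts (tE T)"
      using hp p0 unfolding graph_hom_def by blast
    have Q0: "tq0 T ` verts (tF T) = verts (tE T)"
      using hq q0 unfolding graph_hom_def by blast
    have P1: "tp1 T ` arcs (tF T) = arcs (tE T)"
    proof
      show "tp1 T ` arcs (tF T) \<subseteq> arcs (tE T)" using hp unfolding graph_hom_def by blast
    next
      show "arcs (tE T) \<subseteq> tp1 T ` arcs (tF T)"
      proof
        fix e assume e: "e \<in> arcs (tE T)"
        then obtain w where "w \<in> verts (tF T)" "tp0 T w = rng (tE T) e" using p0 Ev by metis
        then obtain f where "f \<in> arcs (tF T)" "tp1 T f = e" using liftr e by metis
        thus "e \<in> tp1 T ` arcs (tF T)" by blast
      qed
    qed
    have Q1: "tq1 T ` arcs (tF T) = arcs (tE T)"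
    proof
      show "tq1 T ` arcs (tF T) \<subseteq> arcs (tE T)" using hq unfolding graph_hom_def by blast
    next
      show "arcs (tE T) \<subseteq> tq1 T ` arcs (tF T)"
      proof
        fix e assume e: "e \<in> arcs (tE T)"
        then obtain w where "w \<in> verts (tF T)" "tq0 T w = src (tE T) e" using q0 Ev by metis
        then obtain f where "f \<in> arcs (tF T)" "tq1 T f = e" using lifts e by metis
        thus "e \<in> tq1 T ` arcs (tF T)" by blast
      qed
    qed
    have RF: "rng (tF T) ` arcs (tF T) = verts (tF T)"
    proof
      show "rng (tF T) ` arcs (tF T) \<subseteq> verts (tF T)" using Fv by blast
    next
      show "verts (tF T) \<subseteq> rng (tF T) ` arcs (tF T)"
      proof
        fix w assume w: "w \<in> verts (tF T)"
        hence "tp0 T w \<in> verts (tE T)" using hp unfolding graph_hom_def by blast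
        then obtain e where e: "e \<in> arcs (tE T)" "rng (tE T) e = tp0 T w" using r1 by metis
        then obtain f where "f \<in> arcs (tF T)" "rng (tF T) f = w" using liftr w by metis
        thus "w \<in> rng (tF T) ` arcs (tF T)" by (metis imageI)
      qed
    qed
    have SF: "src (tF T) ` arcs (tF T) = verts (tF T)"
    proof
      show "src (tF T) ` arcs (tF T) \<subseteq> verts (tF T)" using Fv by blast
    next
      show "verts (tF T) \<subseteq> src (tF T) ` arcs (tF T)"
      proof
        fix w assume w: "w \<in> verts (tF T)"
        hence "tq0 T w \<in> verts (tE T)" using hq unfolding graph_hom_def by blast
        then obtain e where e: "e \<in> arcs (tE T)" "src (tE T) e = tq0 T w" using s1 by metis
        then obtain f where "f \<in> arcs (tF T)" "src (tF T) f = w" using lifts w by metis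
        thus "w \<in> src (tF T) ` arcs (tF T)" by (metis imageI)
      qed
    qed
    show "textile_essential T"
      unfolding textile_essential_def graph_essential_def using P0 Q0 P1 Q1 RF SF by blast
  qed
qed

end
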